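(* Let $n \ge 1$ and let $T_n$ be the $n\times n$ matrix with entries $t_{ij} = |i-j|$ for $i,j = 1,\ldots,n$. Then $T_n$ is solvable if and only if $n \equiv 0$ or $1 \pmod 4$. Equivalently: there exists a permutation $f:\{1,\ldots,n\}\to\{1,\ldots,n\}$ such that $|f(i)-i|$ takes each of the values $0,1,\ldots,n-1$ exactly once (as $i$ ranges over $\{1,\ldots,n\}$) if and only if $n \equiv 0$ or $1 \pmod 4$.
   Context: $T_n$ is called solvable if one can select $n$ entries of $T_n$, no two in the same row or the same column, whose values are exactly $0,1,\ldots,n-1$ (each value once). *)

theory Defs
  imports Main
begin

definition T :: "nat \<Rightarrow> nat \<Rightarrow> nat \<Rightarrow> int" where
  "T n i j = \<bar>int i - int j\<bar>"

text \<open>A selection of n entries of an n x n matrix M (indices 1..n), no two in the same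
  row or column, is given by a permutation f of {1..n} (entry (i, f i) selected in row i).\<close>
definition solvable :: "nat \<Rightarrow> (nat \<Rightarrow> nat \<Rightarrow> int) \<Rightarrow> bool" where
  "solvable n M \<longleftrightarrow> (\<exists>f. bij_betw f {1..n} {1..n} \<and>
      bij_betw (\<lambda>i. M i (f i)) {1..n} (int ` {0..<n}))"

end

theory Submission
  imports Defs
begin


definition gg :: "nat \<Rightarrow> nat \<Rightarrow> nat \<Rightarrow> nat \<Rightarrow> nat" where
"gg n m h x = (if x = 1 then n else if x \<le> m then n+1-x else if x = m+1 then m+1
   else if x \<le> h then n+2-x else if x < n-m then n+1-x else if x = n-m then m
   else if x < n then n-x else 2*m+1)"

definition dd :: "nat \<Rightarrow> nat \<Rightarrow> nat \<Rightarrow> nat \<Rightarrow> nat" where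
"dd n m h x = (if x \<le> gg n m h x then gg n m h x - x else x - gg n m h x)"

lemma dd_eq: "gg n m h x = v \<Longrightarrow> dd n m h x = (if x \<le> v then v - x else x - v)"
  by (simp add: dd_def)

context
  fixes n m h :: nat
  assumes H: "(n=4*m \<and> h=2*m) \<or> (n=4*m+1 \<and> h=2*m+1)"
begin

lemma P1: "x = 1 \<Longrightarrow> x \<le> n \<Longrightarrow> gg n m h x = n \<and> dd n m h x + 1 = n"
  using H by (auto simp add: dd_def gg_def) 
lemma P2: "2\<le>x \<Longrightarrow> x\<le>m \<Longrightarrow> gg n m h x + x = n+1 \<and> dd n m h x + 2*x = n+1"
proof -
  assume a: "2\<le>x" "x\<le>m"
  have g: "gg n m h x = n+1-x" using a by (simp add: gg_def)
  show ?thesis using dd_eq[OF g] g a H by auto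
qed
lemma P3: "2\<le>x \<Longrightarrow> x=m+1 \<Longrightarrow> gg n m h x = m+1 \<and> dd n m h x = 0"
  by (simp add: gg_def dd_def)
lemma P4: "2\<le>x \<Longrightarrow> m+2\<le>x \<Longrightarrow> x\<le>h \<Longrightarrow> gg n m h x + x = n+2 \<and> dd n m h x + 2*x = n+2"
proof -
  assume a: "2\<le>x" "m+2\<le>x" "x\<le>h"
  have g: "gg n m h x = n+2-x" using a by (simp add: gg_def)
  show ?thesis using dd_eq[OF g] g a H by auto
qed
lemma P5: "2\<le>x \<Longrightarrow> m+2\<le>x \<Longrightarrow> h<x \<Longrightarrow> x+m<n \<Longrightarrow> gg n m h x + x = n+1 \<and> dd n m h x + n + 1 = 2*x"
proof -
  assume a: "2\<le>x" "m+2\<le>x" "h<x" "x+m<n"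
  have g: "gg n m h x = n+1-x" using a by (simp add: gg_def)
  show ?thesis using dd_eq[OF g] g a H by auto
qed
lemma P6: "2\<le>x \<Longrightarrow> m+2\<le>x \<Longrightarrow> h<x \<Longrightarrow> x+m=n \<Longrightarrow> gg n m h x = m \<and> dd n m h x + 2*m = n"
proof -
  assume a: "2\<le>x" "m+2\<le>x" "h<x" "x+m=n"
  have g: "gg n m h x = m" using a by (simp add: gg_def)
  show ?thesis using dd_eq[OF g] g a H by auto
qed
lemma P7: "2\<le>x \<Longrightarrow> m+2\<le>x \<Longrightarrow> h<x \<Longrightarrow> x+m>n \<Longrightarrow> x<n \<Longrightarrow> gg n m h x + x = n \<and> dd n m h x + n = 2*x"
proof -
  assume a: "2\<le>x" "m+2\<le>x" "h<x" "x+m>n" "x<n"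
  have g: "gg n m h x = n-x" using a by (simp add: gg_def)
  show ?thesis using dd_eq[OF g] g a H by auto
qed
lemma P8: "2\<le>x \<Longrightarrow> m+2\<le>x \<Longrightarrow> h<x \<Longrightarrow> x+m>n \<Longrightarrow> x=n \<Longrightarrow> gg n m h x = 2*m+1 \<and> dd n m h x + 2*m+1 = n"
proof -
  assume a: "2\<le>x" "m+2\<le>x" "h<x" "x+m>n" "x=n"
  have g: "gg n m h x = 2*m+1" using a by (simp add: gg_def, arith)
  show ?thesis using dd_eq[OF g] g a H by auto
qed

lemma pieces:
  assumes x: "1 \<le> x" "x \<le> n"
  shows "(x=1 \<and> gg n m h x=n \<and> dd n m h x+1=n)
   \<or> (2\<le>x \<and> x\<le>m \<and> gg n m h x+x=n+1 \<and> dd n m h x+2*x=n+1)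
   \<or> (2\<le>x \<and> x=m+1 \<and> gg n m h x=m+1 \<and> dd n m h x=0)
   \<or> (2\<le>x \<and> m+2\<le>x \<and> x\<le>h \<and> gg n m h x+x=n+2 \<and> dd n m h x+2*x=n+2)
   \<or> (2\<le>x \<and> m+2\<le>x \<and> h<x \<and> x+m<n \<and> gg n m h x+x=n+1 \<and> dd n m h x+n+1=2*x)
   \<or> (2\<le>x \<and> m+2\<le>x \<and> h<x \<and> x+m=n \<and> gg n m h x=m \<and> dd n m h x+2*m=n)
   \<or> (2\<le>x \<and> m+2\<le>x \<and> h<x \<and> x+m>n \<and> x<n \<and> gg n m h x+x=n \<and> dd n m h x+n=2*x)
   \<or> (2\<le>x \<and> m+2\<le>x \<and> h<x \<and> x+m>n \<and> x=n \<and> gg n m h x=2*m+1 \<and> dd n m h x+2*m+1=n)"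
proof (cases "x = 1")
  case a: True show ?thesis using P1[OF a x(2)] a by blast
next
  case False
  hence b2: "2 \<le> x" using x by simp
  show ?thesis
  proof (cases "x \<le> m")
    case True thus ?thesis using P2[OF b2 True] b2 True by blast
  next
    case c1: False
    show ?thesis
    proof (cases "x = m+1")
      case True thus ?thesis using P3[OF b2 True] b2 True by blast
    next
      case False
      hence b3: "m+2 \<le> x" using c1 by simp
      show ?thesis
      proof (cases "x \<le> h")
        case True thus ?thesis using P4[OF b2 b3 True] b2 b3 True by blast
      next
        case False
        hence b4: "h < x" by simp
        show ?thesis
        proof (cases "x+m < n")
          case True thus ?thesis using P5[OF b2 b3 b4 True] b2 b3 b4 True by blast
        next
          case c5: False
          show ?thesis
          proof (cases "x+m = n")
            case True thus ?thesis using P6[OF b2 b3 b4 True] b2 b3 b4 True by blast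
          next
            case False
            hence b6: "x+m > n" using c5 by simp
            show ?thesis
            proof (cases "x < n")
              case True thus ?thesis using P7[OF b2 b3 b4 b6 True] b2 b3 b4 b6 True by blast
            next
              case False
              hence xn: "x = n" using x by simp
              show ?thesis using P8[OF b2 b3 b4 b6 xn] b2 b3 b4 b6 xn by blast
            qed
          qed
        qed
      qed
    qed
  qed
qed

lemma m_pos: "2 \<le> n \<Longrightarrow> 1 \<le> m" using H by linarith

lemma gg_surj:
  assumes y: "1 \<le> y" "y \<le> n"
  shows "\<exists>x. 1 \<le> x \<and> x \<le> n \<and> gg n m h x = y"
proof (cases "y = n")
  case True thus ?thesis using P1[of 1] y by auto
next
  case yn: False
  hence m1: "1 \<le> m" using y H by linarith
  show ?thesis
  proof (cases "y = m+1")
    case True thus ?thesis using P3[of "m+1"] m1 by (intro exI[of _ "m+1"]) (use H in auto)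
  next
    case c2: False
    show ?thesis
    proof (cases "y = m")
      case True
      have a: "2 \<le> n-m" "m+2 \<le> n-m" "h < n-m" "n-m+m = n" using m1 H by linarith+
      show ?thesis using P6[OF a] a True by (intro exI[of _ "n-m"]) auto
    next
      case c3: False
      show ?thesis
      proof (cases "y = 2*m+1")
        case True
        have a: "2 \<le> n" "m+2 \<le> n" "h < n" "n+m > n" using m1 H by linarith+
        show ?thesis using P8[OF a refl] a True by (intro exI[of _ n]) auto
      next
        case c4: False
        show ?thesis
        proof (cases "y < m")
          case True
          have a: "2 \<le> n-y" "m+2 \<le> n-y" "h < n-y" "n-y+m > n" "n-y < n" using m1 H True y by linarith+
          show ?thesis using P7[OF a] a y by (intro exI[of _ "n-y"]) auto
        next
          case c5: False
          hence ym: "m+2 \<le> y" using c2 c3 by linarith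
          show ?thesis
          proof (cases "y+h \<le> n")
            case True
            have a: "2 \<le> n+1-y" "m+2 \<le> n+1-y" "h < n+1-y" "n+1-y+m < n" using m1 H True ym y by linarith+
            show ?thesis using P5[OF a] a y by (intro exI[of _ "n+1-y"]) auto
          next
            case c6: False
            show ?thesis
            proof (cases "y+m \<le> n")
              case True
              have a: "2 \<le> n+2-y" "m+2 \<le> n+2-y" "n+2-y \<le> h" using m1 H True c6 c4 ym y by linarith+
              show ?thesis using P4[OF a] a y by (intro exI[of _ "n+2-y"]) auto
            next
              case False
              have a: "2 \<le> n+1-y" "n+1-y \<le> m" using m1 H False yn y by linarith+
              show ?thesis using P2[OF a] a y by (intro exI[of _ "n+1-y"]) auto
            qed
          qed
        qed
      qed
    qed
  qed
qed

lemma dd_surj: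
  assumes d: "d < n"
  shows "\<exists>x. 1 \<le> x \<and> x \<le> n \<and> dd n m h x = d"
proof (cases "d+1 = n")
  case True thus ?thesis using P1[of 1] d by auto
next
  case c1: False
  hence n2: "2 \<le> n" using d by linarith
  hence m1: "1 \<le> m" using H by linarith
  show ?thesis
  proof (cases "d = 0")
    case True thus ?thesis using P3[of "m+1"] m1 by (intro exI[of _ "m+1"]) (use H in auto)
  next
    case d0: False
    show ?thesis
    proof (cases "d+2*m = n")
      case True
      have a: "2 \<le> n-m" "m+2 \<le> n-m" "h < n-m" "n-m+m = n" using m1 H by linarith+
      show ?thesis using P6[OF a] a True by (intro exI[of _ "n-m"]) auto
    next
      case c3: False
      show ?thesis
      proof (cases "d+2*m+1 = n")
        case True
        have a: "2 \<le> n" "m+2 \<le> n" "h < n" "n+m > n" using m1 H by linarith+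
        show ?thesis using P8[OF a refl] a True by (intro exI[of _ n]) auto
      next
        case c4: False
        have "d+n = 2*((d+n) div 2) \<or> d+n = 2*((d+n) div 2)+1" by presburger
        then obtain k where k: "d+n = 2*k \<or> d+n = 2*k+1" by blast
        show ?thesis
        proof (cases "d+2*m > n")
          case big: True
          show ?thesis
          proof (cases "d+n = 2*k")
            case True
            have a: "2 \<le> k" "m+2 \<le> k" "h < k" "k+m > n" "k < n" using m1 H True big d by linarith+
            show ?thesis using P7[OF a] a True by (intro exI[of _ k]) auto
          next
            case False
            hence kk: "d+n = 2*k+1" using k by simp
            have "d \<noteq> n - 2" using kk n2 by presburger
            hence a: "2 \<le> n-k" "n-k \<le> m" using m1 H kk big d c1 by linarith+
            show ?thesis using P2[OF a] a kk by (intro exI[of _ "n-k"]) auto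
          qed
        next
          case small: False
          show ?thesis
          proof (cases "d+n = 2*k")
            case True
            have "d \<noteq> 1 \<or> n = 4*m+1" using True H by presburger
            hence a: "2 \<le> n+1-k" "m+2 \<le> n+1-k" "n+1-k \<le> h" using m1 H True small d d0 c3 c4 by linarith+
            show ?thesis using P4[OF a] a True by (intro exI[of _ "n+1-k"]) auto
          next
            case False
            hence kk: "d+n = 2*k+1" using k by simp
            have a: "2 \<le> k+1" "m+2 \<le> k+1" "h < k+1" "k+1+m < n" using m1 H kk small d d0 c3 c4 by linarith+
            show ?thesis using P5[OF a] a kk by (intro exI[of _ "k+1"]) auto
          qed
        qed
      qed
    qed
  qed
qed

lemma gg_range:
  assumes x: "1 \<le> x" "x \<le> n"
  shows "1 \<le> gg n m h x \<and> gg n m h x \<le> n"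
proof -
  define g where "g = gg n m h x"
  define d where "d = dd n m h x"
  show ?thesis using pieces[OF x, folded g_def d_def] H unfolding g_def[symmetric]
    by (elim disjE conjE; linarith)
qed

lemma dd_range:
  assumes x: "1 \<le> x" "x \<le> n"
  shows "dd n m h x < n"
proof -
  define g where "g = gg n m h x"
  define d where "d = dd n m h x"
  show ?thesis using pieces[OF x, folded g_def d_def] H unfolding d_def[symmetric]
    by (elim disjE conjE; linarith)
qed
end

lemma T_dd: "T n i (gg n m h i) = int (dd n m h i)"
  unfolding T_def dd_def by auto

lemma sum_lt2: "(\<Sum>k<n. k) * 2 = n * (n - 1::nat)"
proof (induction n)
  case 0 thus ?case by simp
next
  case (Suc n) thus ?case by (cases n) (auto simp: algebra_simps)
qed

lemma sufficiency:
  assumes H: "(n=4*m \<and> h=2*m) \<or> (n=4*m+1 \<and> h=2*m+1)"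
  shows "solvable n (T n)"
proof -
  let ?f = "gg n m h"
  have sub1: "?f ` {1..n} \<subseteq> {1..n}" using gg_range[OF H] by auto
  have sup1: "{1..n} \<subseteq> ?f ` {1..n}"
  proof
    fix y assume "y \<in> {1..n}"
    then obtain x where "1 \<le> x" "x \<le> n" "?f x = y" using gg_surj[OF H, of y] by auto
    thus "y \<in> ?f ` {1..n}" by force
  qed
  have im1: "?f ` {1..n} = {1..n}" using sub1 sup1 by blast
  have c1: "card (?f ` {1..n}) = card {1..n}" by (subst im1) (rule refl)
  have inj1: "inj_on ?f {1..n}" using eq_card_imp_inj_on[OF _ c1] by simp
  have b1: "bij_betw ?f {1..n} {1..n}" using inj1 im1 by (simp add: bij_betw_def)
  let ?g = "\<lambda>i. T n i (?f i)"
  have geq: "?g = (\<lambda>i. int (dd n m h i))" using T_dd by auto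
  have sub2: "?g ` {1..n} \<subseteq> int ` {0..<n}" unfolding geq using dd_range[OF H] by auto
  have sup2: "int ` {0..<n} \<subseteq> ?g ` {1..n}"
  proof
    fix z assume "z \<in> int ` {0..<n}"
    then obtain d where d: "d < n" "z = int d" by auto
    then obtain x where "1 \<le> x" "x \<le> n" "dd n m h x = d" using dd_surj[OF H, of d] by auto
    thus "z \<in> ?g ` {1..n}" unfolding geq using d by force
  qed
  have im2: "?g ` {1..n} = int ` {0..<n}" using sub2 sup2 by blast
  have c2: "card (?g ` {1..n}) = card {1..n}"
    by (subst im2) (simp add: card_image)
  have inj2: "inj_on ?g {1..n}" using eq_card_imp_inj_on[OF _ c2] by simp
  have b2: "bij_betw ?g {1..n} (int ` {0..<n})" using inj2 im2 by (simp add: bij_betw_def)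
  show ?thesis unfolding solvable_def using b1 b2 by blast
qed

lemma necessity:
  assumes "solvable n (T n)"
  shows "n mod 4 = 0 \<or> n mod 4 = 1"
proof -
  obtain f where b1: "bij_betw f {1..n} {1..n}"
    and b2: "bij_betw (\<lambda>i. T n i (f i)) {1..n} (int ` {0..<n})"
    using assms unfolding solvable_def by blast
  have s1: "(\<Sum>i\<in>{1..n}. int (f i)) = (\<Sum>i\<in>{1..n}. int i)"
    using sum.reindex_bij_betw[OF b1, of int] by simp
  have s2: "(\<Sum>i\<in>{1..n}. T n i (f i)) = (\<Sum>k\<in>int ` {0..<n}. k)"
    using sum.reindex_bij_betw[OF b2, of "\<lambda>k. k"] by simp
  have s3: "(\<Sum>k\<in>int ` {0..<n}. k) = int (\<Sum>k<n. k)"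
    by (simp add: sum.reindex lessThan_atLeast0)
  have ev: "even (T n i (f i) - (int (f i) - int i))" for i
    unfolding T_def by (cases "int i \<le> int (f i)") auto
  have "even (\<Sum>i\<in>{1..n}. T n i (f i) - (int (f i) - int i))"
    by (rule dvd_sum) (use ev in auto)
  also have "(\<Sum>i\<in>{1..n}. T n i (f i) - (int (f i) - int i)) = (\<Sum>i\<in>{1..n}. T n i (f i))"
    using s1 by (simp add: sum_subtractf)
  finally have "even (int (\<Sum>k<n. k))" using s2 s3 by simp
  hence e: "even (\<Sum>k<n. k)" by (metis even_of_nat)
  then obtain r where r: "(\<Sum>k<n. k) = 2 * r" by blast
  have nn: "n * (n - 1) = 4 * r" using sum_lt2[of n] r by simp
  show ?thesis
  proof (rule ccontr)
    assume "\<not> ?thesis"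
    hence "n mod 4 = 2 \<or> n mod 4 = 3" by presburger
    then obtain q where q: "n = 4*q+2 \<or> n = 4*q+3" by (metis div_mod_decomp mult.commute)
    thus False
    proof
      assume "n = 4*q+2"
      hence "n * (n - 1) = 4 * (4*q*q + 3*q) + 2" by (simp add: algebra_simps)
      thus False using nn by presburger
    next
      assume "n = 4*q+3"
      hence "n * (n - 1) = 4 * (4*q*q + 5*q + 1) + 2" by (simp add: algebra_simps)
      thus False using nn by presburger
    qed
  qed
qed

theorem theorem1:
  fixes n :: nat
  assumes "n \<ge> 1"
  shows "solvable n (T n) \<longleftrightarrow> (n mod 4 = 0 \<or> n mod 4 = 1)"
proof
  assume "solvable n (T n)" thus "n mod 4 = 0 \<or> n mod 4 = 1" by (rule necessity)
next
  assume a: "n mod 4 = 0 \<or> n mod 4 = 1"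
  have "(n=4*(n div 4) \<and> (n+1) div 2=2*(n div 4)) \<or> (n=4*(n div 4)+1 \<and> (n+1) div 2=2*(n div 4)+1)"
    using a by presburger
  thus "solvable n (T n)" by (rule sufficiency)
qed

end
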